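(* Let $(X,\mathcal B)$ be any $(K_4-e)$-design of order $11$, and let $D=\{\{x,y\}:\ [x,y,z-u]\in\mathcal B\}$. Then the graph $(X,D)$ is a cycle of length $11$.
   Context: $K_4-e$ is the graph on four vertices $a,b,c,d$ with edges $ab,ac,ad,bc,bd$; it is denoted $[a,b,c-d]$ (so in $[x,y,z-u]$ the vertices $x,y$ have degree $3$, $z,u$ have degree $2$, and $zu$ is the missing edge). A $(K_4-e)$-design of order $v$ is a pair $(X,\mathcal B)$ where $X$ is a set of $v$ vertices and $\mathcal B$ is a collection of copies of $K_4-e$ (called blocks) with vertices in $X$ whose edge sets partition the edge set of the complete graph $K_v$ on $X$. *)

theory Defs
  imports Main
begin

text \<open>A block [a,b,c-d] of a (K4-e)-design is represented by the tuple (a,b,c,d):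
  a,b are the degree-3 vertices, c,d the degree-2 vertices, cd the missing edge.\<close>

type_synonym 'a block = "'a \<times> 'a \<times> 'a \<times> 'a"

definition block_edges :: "'a block \<Rightarrow> 'a set set" where
  "block_edges = (\<lambda>(a,b,c,d). {{a,b},{a,c},{a,d},{b,c},{b,d}})"

definition block_verts :: "'a block \<Rightarrow> 'a list" where
  "block_verts = (\<lambda>(a,b,c,d). [a,b,c,d])"

definition K4e_design :: "'a set \<Rightarrow> 'a block set \<Rightarrow> nat \<Rightarrow> bool" where
  "K4e_design X B v \<longleftrightarrow>
     finite X \<and> card X = v \<and>
     (\<forall>\<beta>\<in>B. distinct (block_verts \<beta>) \<and> set (block_verts \<beta>) \<subseteq> X) \<and>
     (\<forall>x\<in>X. \<forall>y\<in>X. x \<noteq> y \<longrightarrow> (\<exists>!\<beta>. \<beta> \<in> B \<and> {x,y} \<in> block_edges \<beta>))"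

definition spine_edges :: "'a block set \<Rightarrow> 'a set set" where
  "spine_edges B = {{x,y} | x y z u. (x,y,z,u) \<in> B}"

definition is_cycle :: "'a set \<Rightarrow> 'a set set \<Rightarrow> nat \<Rightarrow> bool" where
  "is_cycle X D n \<longleftrightarrow> 3 \<le> n \<and>
     (\<exists>f. bij_betw f {0..<n} X \<and> D = {{f i, f ((i + 1) mod n)} | i. i < n})"

end

theory Submission
  imports Defs
begin


lemma swap_card:
  assumes "finite A" "finite B"
  shows "(\<Sum>x\<in>A. card {y\<in>B. R x y}) = (\<Sum>y\<in>B. card {x\<in>A. R x y})"
  using sum.swap_restrict[OF assms, of "\<lambda>x y. (1::nat)" R] by simp

locale D11 =
  fixes X :: "'a set" and B :: "'a block set"
  assumes des: "K4e_design X B 11"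
begin

lemma finX: "finite X" and cardX: "card X = 11"
  using des by (auto simp: K4e_design_def)

lemma blockB: "(a,b,c,d) \<in> B \<Longrightarrow> a \<in> X \<and> b \<in> X \<and> c \<in> X \<and> d \<in> X \<and>
   a \<noteq> b \<and> a \<noteq> c \<and> a \<noteq> d \<and> b \<noteq> c \<and> b \<noteq> d \<and> c \<noteq> d"
  using des by (fastforce simp: K4e_design_def block_verts_def)

lemma finB: "finite B"
proof -
  have "B \<subseteq> X \<times> X \<times> X \<times> X" using blockB by auto
  thus ?thesis using finX by (meson finite_SigmaI finite_subset)
qed

lemma ex1: "x \<in> X \<Longrightarrow> y \<in> X \<Longrightarrow> x \<noteq> y \<Longrightarrow> \<exists>!\<beta>. \<beta> \<in> B \<and> {x,y} \<in> block_edges \<beta>"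
  using des by (auto simp: K4e_design_def)

lemma uniq: "\<beta>1 \<in> B \<Longrightarrow> \<beta>2 \<in> B \<Longrightarrow> {p,q} \<in> block_edges \<beta>1 \<Longrightarrow> {p,q} \<in> block_edges \<beta>2
   \<Longrightarrow> p \<noteq> q \<Longrightarrow> \<beta>1 = \<beta>2"
proof -
  assume a: "\<beta>1 \<in> B" "\<beta>2 \<in> B" "{p,q} \<in> block_edges \<beta>1" "{p,q} \<in> block_edges \<beta>2" "p \<noteq> q"
  obtain a1 b1 c1 d1 where e: "\<beta>1 = (a1,b1,c1,d1)" by (cases \<beta>1) auto
  have "p \<in> X \<and> q \<in> X" using a(3) blockB[of a1 b1 c1 d1] a(1) e
    by (auto simp: block_edges_def doubleton_eq_iff)
  thus ?thesis using ex1[of p q] a by blast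
qed

definition blk :: "'a \<Rightarrow> 'a \<Rightarrow> 'a \<Rightarrow> 'a \<Rightarrow> bool" where
  "blk x y z u \<longleftrightarrow> (x,y,z,u) \<in> B \<or> (y,x,z,u) \<in> B \<or> (x,y,u,z) \<in> B \<or> (y,x,u,z) \<in> B"

definition adj :: "'a \<Rightarrow> 'a \<Rightarrow> bool" where
  "adj x y \<longleftrightarrow> (\<exists>z u. blk x y z u)"

definition Zr :: "'a \<Rightarrow> 'a \<Rightarrow> bool" where
  "Zr x v \<longleftrightarrow> (\<exists>y u. blk x y v u)"

lemma blk_sym1: "blk x y z u \<Longrightarrow> blk y x z u" and blk_sym2: "blk x y z u \<Longrightarrow> blk x y u z"
  by (auto simp: blk_def)

lemma blk_X: "blk x y z u \<Longrightarrow> x \<in> X \<and> y \<in> X \<and> z \<in> X \<and> u \<in> X \<and>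
   x \<noteq> y \<and> x \<noteq> z \<and> x \<noteq> u \<and> y \<noteq> z \<and> y \<noteq> u \<and> z \<noteq> u"
  unfolding blk_def using blockB by blast

lemma be1: "block_edges (y,x,z,u) = {{x,y},{x,z},{x,u},{y,z},{y,u}}"
  unfolding block_edges_def by (simp add: insert_commute doubleton_eq_iff)
lemma be2: "block_edges (x,y,u,z) = {{x,y},{x,z},{x,u},{y,z},{y,u}}"
  unfolding block_edges_def by (simp add: insert_commute)
lemma be3: "block_edges (y,x,u,z) = {{x,y},{x,z},{x,u},{y,z},{y,u}}"
  unfolding block_edges_def by (simp add: insert_commute)
lemma be0: "block_edges (x,y,z,u) = {{x,y},{x,z},{x,u},{y,z},{y,u}}"
  unfolding block_edges_def by simp

lemma blk_ex:
  assumes "blk x y z u"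
  obtains \<beta> where "\<beta>\<in>B" "block_edges \<beta> = {{x,y},{x,z},{x,u},{y,z},{y,u}}"
   "\<forall>x' y' z' u'. \<beta> = (x',y',z',u') \<longrightarrow> {x',y'} = {x,y} \<and> {z',u'} = {z,u}"
proof -
  consider "(x,y,z,u) \<in> B" | "(y,x,z,u) \<in> B" | "(x,y,u,z) \<in> B" | "(y,x,u,z) \<in> B"
    using assms unfolding blk_def by blast
  then show ?thesis
  proof cases
    case 1 then show ?thesis by (intro that[of "(x,y,z,u)"], simp, simp only: be0) auto
  next
    case 2 then show ?thesis by (intro that[of "(y,x,z,u)"], simp, simp only: be1) auto
  next
    case 3 then show ?thesis by (intro that[of "(x,y,u,z)"], simp, simp only: be2) auto
  next
    case 4 then show ?thesis by (intro that[of "(y,x,u,z)"], simp, simp only: be3) auto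
  qed
qed

lemma U: "blk x y z u \<Longrightarrow> blk x' y' z' u' \<Longrightarrow> {p,q} \<in> {{x,y},{x,z},{x,u},{y,z},{y,u}} \<Longrightarrow>
   {p,q} \<in> {{x',y'},{x',z'},{x',u'},{y',z'},{y',u'}} \<Longrightarrow> p \<noteq> q \<Longrightarrow>
   {x,y} = {x',y'} \<and> {z,u} = {z',u'}"
proof -
  assume a: "blk x y z u" "blk x' y' z' u'" "{p,q} \<in> {{x,y},{x,z},{x,u},{y,z},{y,u}}"
    "{p,q} \<in> {{x',y'},{x',z'},{x',u'},{y',z'},{y',u'}}" "p \<noteq> q"
  obtain \<beta> where b: "\<beta>\<in>B" "block_edges \<beta> = {{x,y},{x,z},{x,u},{y,z},{y,u}}"
    "\<forall>x1 y1 z1 u1. \<beta> = (x1,y1,z1,u1) \<longrightarrow> {x1,y1} = {x,y} \<and> {z1,u1} = {z,u}"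
    by (rule blk_ex[OF a(1)])
  obtain \<beta>' where b': "\<beta>'\<in>B" "block_edges \<beta>' = {{x',y'},{x',z'},{x',u'},{y',z'},{y',u'}}"
    "\<forall>x1 y1 z1 u1. \<beta>' = (x1,y1,z1,u1) \<longrightarrow> {x1,y1} = {x',y'} \<and> {z1,u1} = {z',u'}"
    by (rule blk_ex[OF a(2)])
  have e1: "{p,q} \<in> block_edges \<beta>" using b(2) a(3) by (simp only:)
  have e2: "{p,q} \<in> block_edges \<beta>'" using b'(2) a(4) by (simp only:)
  have eq: "\<beta> = \<beta>'" by (rule uniq[OF b(1) b'(1) e1 e2 a(5)])
  obtain a1 b1 c1 d1 where t: "\<beta> = (a1,b1,c1,d1)" by (cases \<beta>) auto
  have "{a1,b1} = {x,y} \<and> {c1,d1} = {z,u}" using b(3) t by blast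
  moreover have "{a1,b1} = {x',y'} \<and> {c1,d1} = {z',u'}" using b'(3) t eq by blast
  ultimately show ?thesis by simp
qed

lemma U1: "blk x y z u \<Longrightarrow> blk x y z' u' \<Longrightarrow> {z,u} = {z',u'}"
  using U[of x y z u x y z' u' x y] blk_X by blast

lemma U2: "blk x y z u \<Longrightarrow> \<not> adj x z"
proof
  assume a: "blk x y z u" "adj x z"
  then obtain a b where "blk x z a b" by (auto simp: adj_def)
  from U[OF a(1) this, of x z] blk_X[OF a(1)] show False by (auto simp: doubleton_eq_iff)
qed

lemma U3: "blk x y z u \<Longrightarrow> blk x y' z u' \<Longrightarrow> y = y' \<and> u = u'"
proof -
  assume a: "blk x y z u" "blk x y' z u'"
  from U[OF a, of x z] blk_X[OF a(1)] blk_X[OF a(2)] show ?thesis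
    by (auto simp: doubleton_eq_iff)
qed

lemma U4: "blk x y z u \<Longrightarrow> blk z y' x u' \<Longrightarrow> False"
proof -
  assume a: "blk x y z u" "blk z y' x u'"
  from U[OF a, of x z] blk_X[OF a(1)] blk_X[OF a(2)] show False
    by (auto simp: doubleton_eq_iff)
qed

lemma adj_sym: "adj x y \<Longrightarrow> adj y x"
  by (auto simp: adj_def dest: blk_sym1)

lemma adj_X: "adj x y \<Longrightarrow> x \<in> X \<and> y \<in> X \<and> x \<noteq> y"
  by (auto simp: adj_def dest: blk_X)

lemma Zr_not_adj: "Zr x v \<Longrightarrow> \<not> adj x v"
  by (auto simp: Zr_def dest: U2)

lemma Zr_not_adj': "Zr x v \<Longrightarrow> \<not> adj v x"
  using Zr_not_adj adj_sym by blast

lemma Zr_asym: "Zr x v \<Longrightarrow> Zr v x \<Longrightarrow> False"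
  by (auto simp: Zr_def dest: U4)

lemma Tri: "x \<in> X \<Longrightarrow> v \<in> X \<Longrightarrow> x \<noteq> v \<Longrightarrow> adj x v \<or> Zr x v \<or> Zr v x"
proof -
  assume a: "x \<in> X" "v \<in> X" "x \<noteq> v"
  then obtain \<beta> where b: "\<beta> \<in> B" "{x,v} \<in> block_edges \<beta>" using ex1 by blast
  obtain p q r s where e: "\<beta> = (p,q,r,s)" by (cases \<beta>) auto
  have bl: "blk p q r s" using b e by (auto simp: blk_def)
  from b(2) e have "{x,v} \<in> {{p,q},{p,r},{p,s},{q,r},{q,s}}" by (simp add: block_edges_def)
  then show ?thesis
    using bl blk_sym1[OF bl] blk_sym2[OF bl] blk_sym2[OF blk_sym1[OF bl]]
    by (auto simp: doubleton_eq_iff adj_def Zr_def)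
qed

end



context D11 begin

definition spb :: "'a \<Rightarrow> 'a block set" where
  "spb x = {\<beta>\<in>B. fst \<beta> = x \<or> fst (snd \<beta>) = x}"
definition slb :: "'a \<Rightarrow> 'a block set" where
  "slb x = {\<beta>\<in>B. fst (snd (snd \<beta>)) = x \<or> snd (snd (snd \<beta>)) = x}"

lemma cnt: "finite A \<Longrightarrow> (\<Sum>x\<in>A. of_bool (P x)::nat) = card {x\<in>A. P x}"
  by (simp add: Int_def conj_commute)

lemma fiber: "\<beta> \<in> B \<Longrightarrow> x \<in> X \<Longrightarrow> card {v\<in>X-{x}. {x,v} \<in> block_edges \<beta>} =
   (if fst \<beta> = x \<or> fst (snd \<beta>) = x then 3 else if fst (snd (snd \<beta>)) = x \<or> snd (snd (snd \<beta>)) = x then 2 else 0)"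
proof -
  assume a: "\<beta> \<in> B" "x \<in> X"
  obtain p q r s where t: "\<beta> = (p,q,r,s)" by (cases \<beta>) auto
  have d: "p \<in> X \<and> q \<in> X \<and> r \<in> X \<and> s \<in> X \<and> p \<noteq> q \<and> p \<noteq> r \<and> p \<noteq> s \<and> q \<noteq> r \<and> q \<noteq> s \<and> r \<noteq> s"
    using blockB a t by blast
  have S: "{v\<in>X-{x}. {x,v} \<in> block_edges \<beta>} =
     (if x = p then {q,r,s} else if x = q then {p,r,s} else if x = r then {p,q} else if x = s then {p,q} else {})"
    using d by (auto simp: t block_edges_def doubleton_eq_iff)
  show ?thesis apply (subst S) using d by (auto simp: t)
qed

lemma deg: "x \<in> X \<Longrightarrow> 3 * card (spb x) + 2 * card (slb x) = 10"
proof -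
  assume x: "x \<in> X"
  let ?N = "X - {x}"
  have fN: "finite ?N" using finX by simp
  have cN: "card ?N = 10" using finX cardX x by simp
  have one: "\<forall>v\<in>?N. card {\<beta>\<in>B. {x,v} \<in> block_edges \<beta>} = 1"
  proof
    fix v assume v: "v \<in> ?N"
    then obtain \<beta> where b: "\<beta> \<in> B \<and> {x,v} \<in> block_edges \<beta>" "\<forall>\<gamma>. \<gamma> \<in> B \<and> {x,v} \<in> block_edges \<gamma> \<longrightarrow> \<gamma> = \<beta>"
      using ex1[of x v] x by blast
    then have "{\<beta>\<in>B. {x,v} \<in> block_edges \<beta>} = {\<beta>}" by blast
    thus "card {\<beta>\<in>B. {x,v} \<in> block_edges \<beta>} = 1" by simp
  qed
  have "(\<Sum>v\<in>?N. card {\<beta>\<in>B. {x,v} \<in> block_edges \<beta>}) = 10"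
    using one cN by simp
  also have "(\<Sum>v\<in>?N. card {\<beta>\<in>B. {x,v} \<in> block_edges \<beta>}) =
       (\<Sum>\<beta>\<in>B. card {v\<in>?N. {x,v} \<in> block_edges \<beta>})"
    by (rule swap_card[OF fN finB])
  also have "\<dots> = (\<Sum>\<beta>\<in>B. 3 * of_bool (fst \<beta> = x \<or> fst (snd \<beta>) = x)
        + 2 * of_bool (fst (snd (snd \<beta>)) = x \<or> snd (snd (snd \<beta>)) = x))"
  proof (rule sum.cong[OF refl])
    fix \<beta> assume b: "\<beta> \<in> B"
    obtain p q r s where t: "\<beta> = (p,q,r,s)" by (cases \<beta>) auto
    have d: "p \<noteq> q \<and> p \<noteq> r \<and> p \<noteq> s \<and> q \<noteq> r \<and> q \<noteq> s \<and> r \<noteq> s"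
      using blockB b t by blast
    show "card {v\<in>?N. {x,v} \<in> block_edges \<beta>} = 3 * of_bool (fst \<beta> = x \<or> fst (snd \<beta>) = x)
        + 2 * of_bool (fst (snd (snd \<beta>)) = x \<or> snd (snd (snd \<beta>)) = x)"
      using fiber[OF b x] d t by auto
  qed
  also have "\<dots> = 3 * card (spb x) + 2 * card (slb x)"
    by (simp only: sum.distrib sum_distrib_left[symmetric] cnt[OF finB] spb_def slb_def)
  finally show ?thesis by simp
qed

lemma sum_spb: "(\<Sum>x\<in>X. card (spb x)) = 2 * card B"
proof -
  have "(\<Sum>x\<in>X. card (spb x)) = (\<Sum>x\<in>X. card {\<beta>\<in>B. fst \<beta> = x \<or> fst (snd \<beta>) = x})"
    by (simp add: spb_def)
  also have "\<dots> = (\<Sum>\<beta>\<in>B. card {x\<in>X. fst \<beta> = x \<or> fst (snd \<beta>) = x})"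
    by (rule swap_card[OF finX finB])
  also have "\<dots> = (\<Sum>\<beta>\<in>B. 2)"
  proof (rule sum.cong[OF refl])
    fix \<beta> assume b: "\<beta> \<in> B"
    obtain p q r s where t: "\<beta> = (p,q,r,s)" by (cases \<beta>) auto
    have d: "p \<in> X \<and> q \<in> X \<and> p \<noteq> q" using blockB b t by blast
    have "{x\<in>X. fst \<beta> = x \<or> fst (snd \<beta>) = x} = {p,q}" using d t by auto
    thus "card {x\<in>X. fst \<beta> = x \<or> fst (snd \<beta>) = x} = 2" using d by simp
  qed
  finally show ?thesis by simp
qed

lemma sum_slb: "(\<Sum>x\<in>X. card (slb x)) = 2 * card B"
proof -
  have "(\<Sum>x\<in>X. card (slb x)) = (\<Sum>x\<in>X. card {\<beta>\<in>B. fst (snd (snd \<beta>)) = x \<or> snd (snd (snd \<beta>)) = x})"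
    by (simp add: slb_def)
  also have "\<dots> = (\<Sum>\<beta>\<in>B. card {x\<in>X. fst (snd (snd \<beta>)) = x \<or> snd (snd (snd \<beta>)) = x})"
    by (rule swap_card[OF finX finB])
  also have "\<dots> = (\<Sum>\<beta>\<in>B. 2)"
  proof (rule sum.cong[OF refl])
    fix \<beta> assume b: "\<beta> \<in> B"
    obtain p q r s where t: "\<beta> = (p,q,r,s)" by (cases \<beta>) auto
    have d: "r \<in> X \<and> s \<in> X \<and> r \<noteq> s" using blockB b t by blast
    have "{x\<in>X. fst (snd (snd \<beta>)) = x \<or> snd (snd (snd \<beta>)) = x} = {r,s}" using d t by auto
    thus "card {x\<in>X. fst (snd (snd \<beta>)) = x \<or> snd (snd (snd \<beta>)) = x} = 2" using d by simp
  qed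
  finally show ?thesis by simp
qed

lemma cardB: "card B = 11"
proof -
  have "(\<Sum>x\<in>X. 3 * card (spb x) + 2 * card (slb x)) = (\<Sum>x\<in>X. 10)"
    using deg by (rule sum.cong[OF refl])
  hence "3 * (2 * card B) + 2 * (2 * card B) = 110"
    by (simp add: sum.distrib sum_distrib_left[symmetric] sum_spb sum_slb cardX)
  thus ?thesis by simp
qed

lemma spb2: "x \<in> X \<Longrightarrow> card (spb x) = 2"
proof (rule ccontr)
  assume x: "x \<in> X" and n: "card (spb x) \<noteq> 2"
  have le: "\<And>y. y \<in> X \<Longrightarrow> card (spb y) \<le> 2"
  proof -
    fix y assume "y \<in> X"
    from deg[OF this] show "card (spb y) \<le> 2" by presburger
  qed
  have lt: "card (spb x) < 2" using le[OF x] n by simp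
  have "(\<Sum>y\<in>X. card (spb y)) < (\<Sum>y\<in>X. 2)"
    by (rule sum_strict_mono_ex1[OF finX]) (use le x lt in auto)
  thus False using sum_spb cardB cardX by simp
qed

lemma slb2: "x \<in> X \<Longrightarrow> card (slb x) = 2"
  using deg[of x] spb2[of x] by simp

end



context D11 begin

definition osp :: "'a \<Rightarrow> 'a block \<Rightarrow> 'a" where
  "osp x \<beta> = (if fst \<beta> = x then fst (snd \<beta>) else fst \<beta>)"

lemma spb_blk: "\<beta> \<in> spb x \<Longrightarrow> blk x (osp x \<beta>) (fst (snd (snd \<beta>))) (snd (snd (snd \<beta>))) \<and>
   {x, osp x \<beta>} \<in> block_edges \<beta> \<and> osp x \<beta> \<noteq> x"
proof -
  assume a: "\<beta> \<in> spb x"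
  obtain p q r s where t: "\<beta> = (p,q,r,s)" by (cases \<beta>) auto
  have b: "(p,q,r,s) \<in> B" "p = x \<or> q = x" using a t by (auto simp: spb_def)
  have d: "p \<noteq> q" using blockB[OF b(1)] by blast
  show ?thesis using b d by (auto simp: t osp_def blk_def block_edges_def insert_commute)
qed

lemma blk_spb: "blk x y z u \<Longrightarrow> \<exists>\<beta>\<in>spb x. osp x \<beta> = y"
proof -
  assume a: "blk x y z u"
  have "x \<noteq> y" using blk_X[OF a] by blast
  from a have "(x,y,z,u)\<in>B \<or> (y,x,z,u)\<in>B \<or> (x,y,u,z)\<in>B \<or> (y,x,u,z)\<in>B" by (simp add: blk_def)
  thus ?thesis
  proof (elim disjE)
    assume h: "(x,y,z,u)\<in>B" show ?thesis by (rule bexI[of _ "(x,y,z,u)"]) (use h \<open>x\<noteq>y\<close> in \<open>auto simp: spb_def osp_def\<close>)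
  next
    assume h: "(y,x,z,u)\<in>B" show ?thesis by (rule bexI[of _ "(y,x,z,u)"]) (use h \<open>x\<noteq>y\<close> in \<open>auto simp: spb_def osp_def\<close>)
  next
    assume h: "(x,y,u,z)\<in>B" show ?thesis by (rule bexI[of _ "(x,y,u,z)"]) (use h \<open>x\<noteq>y\<close> in \<open>auto simp: spb_def osp_def\<close>)
  next
    assume h: "(y,x,u,z)\<in>B" show ?thesis by (rule bexI[of _ "(y,x,u,z)"]) (use h \<open>x\<noteq>y\<close> in \<open>auto simp: spb_def osp_def\<close>)
  qed
qed

lemma nbx: "x \<in> X \<Longrightarrow> \<exists>y1 y2. y1 \<noteq> y2 \<and> adj x y1 \<and> adj x y2 \<and> (\<forall>y. adj x y \<longrightarrow> y = y1 \<or> y = y2)"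
proof -
  assume x: "x \<in> X"
  obtain \<beta>1 \<beta>2 where s: "spb x = {\<beta>1,\<beta>2}" "\<beta>1 \<noteq> \<beta>2" using spb2[OF x] by (auto simp: card_2_iff)
  have b1: "\<beta>1 \<in> spb x" and b2: "\<beta>2 \<in> spb x" using s by auto
  have B1: "\<beta>1 \<in> B" "\<beta>2 \<in> B" using b1 b2 by (auto simp: spb_def)
  have a1: "adj x (osp x \<beta>1)" "adj x (osp x \<beta>2)" using spb_blk[OF b1] spb_blk[OF b2] by (auto simp: adj_def)
  have ne: "osp x \<beta>1 \<noteq> osp x \<beta>2"
  proof
    assume e: "osp x \<beta>1 = osp x \<beta>2"
    have "\<beta>1 = \<beta>2" using uniq[OF B1, of x "osp x \<beta>1"] spb_blk[OF b1] spb_blk[OF b2] e by auto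
    thus False using s by simp
  qed
  have all: "\<forall>y. adj x y \<longrightarrow> y = osp x \<beta>1 \<or> y = osp x \<beta>2"
  proof (intro allI impI)
    fix y assume "adj x y"
    then obtain z u where "blk x y z u" by (auto simp: adj_def)
    from blk_spb[OF this] obtain \<beta> where "\<beta> \<in> spb x" "osp x \<beta> = y" by blast
    thus "y = osp x \<beta>1 \<or> y = osp x \<beta>2" using s by auto
  qed
  show ?thesis using ne a1 all by blast
qed

lemma nbr2: "adj v p \<Longrightarrow> adj v q \<Longrightarrow> p \<noteq> q \<Longrightarrow> adj v y \<Longrightarrow> y = p \<or> y = q"
proof -
  assume a: "adj v p" "adj v q" "p \<noteq> q" "adj v y"
  have "v \<in> X" using adj_X[OF a(1)] by blast
  from nbx[OF this] obtain y1 y2 where "\<forall>y. adj v y \<longrightarrow> y = y1 \<or> y = y2" by blast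
  with a show ?thesis by blast
qed

lemma adj_blk: "adj x y \<Longrightarrow> \<exists>z u. blk x y z u" by (simp add: adj_def)

lemma blk_adj: "blk x y z u \<Longrightarrow> adj x y" by (auto simp: adj_def)

lemma Zr_blk: "Zr x v \<Longrightarrow> \<exists>y u. blk x y v u" by (simp add: Zr_def)

lemma blk_Zr: "blk x y z u \<Longrightarrow> Zr x z \<and> Zr x u \<and> Zr y z \<and> Zr y u"
  unfolding Zr_def using blk_sym1 blk_sym2 by blast

lemma Zr_via: "Zr x v \<Longrightarrow> y1 \<noteq> y2 \<Longrightarrow> blk x y1 z1 u1 \<Longrightarrow> blk x y2 z2 u2 \<Longrightarrow> v \<in> {z1,u1,z2,u2}"
proof -
  assume a: "Zr x v" "y1 \<noteq> y2" "blk x y1 z1 u1" "blk x y2 z2 u2"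
  obtain y u where b: "blk x y v u" using a(1) Zr_blk by blast
  have "y = y1 \<or> y = y2" using nbr2[OF blk_adj[OF a(3)] blk_adj[OF a(4)] a(2) blk_adj[OF b]] .
  thus ?thesis using U1[OF b] a(3,4) by (auto simp: doubleton_eq_iff)
qed

lemma slx: "x \<in> X \<Longrightarrow> \<exists>p1 q1 t1 p2 q2 t2. blk p1 q1 x t1 \<and> blk p2 q2 x t2 \<and>
   p1 \<noteq> p2 \<and> p1 \<noteq> q2 \<and> q1 \<noteq> p2 \<and> q1 \<noteq> q2 \<and> (\<forall>p. Zr p x \<longrightarrow> p \<in> {p1,q1,p2,q2})"
proof -
  assume x: "x \<in> X"
  obtain \<gamma>1 \<gamma>2 where s: "slb x = {\<gamma>1,\<gamma>2}" "\<gamma>1 \<noteq> \<gamma>2" using slb2[OF x] by (auto simp: card_2_iff)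
  obtain p1 q1 r1 s1 where t1: "\<gamma>1 = (p1,q1,r1,s1)" by (cases \<gamma>1) auto
  obtain p2 q2 r2 s2 where t2: "\<gamma>2 = (p2,q2,r2,s2)" by (cases \<gamma>2) auto
  have "\<gamma>1 \<in> slb x" "\<gamma>2 \<in> slb x" using s by auto
  hence g1: "(p1,q1,r1,s1) \<in> B" "r1 = x \<or> s1 = x" and g2: "(p2,q2,r2,s2) \<in> B" "r2 = x \<or> s2 = x"
    using t1 t2 by (auto simp: slb_def)
  obtain o1 where k1: "blk p1 q1 x o1" using g1 by (auto simp: blk_def)
  obtain o2 where k2: "blk p2 q2 x o2" using g2 by (auto simp: blk_def)
  have E1: "\<And>p. p \<in> {p1,q1} \<Longrightarrow> {p,x} \<in> block_edges \<gamma>1" using g1 by (auto simp: t1 block_edges_def insert_commute)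
  have E2: "\<And>p. p \<in> {p2,q2} \<Longrightarrow> {p,x} \<in> block_edges \<gamma>2" using g2 by (auto simp: t2 block_edges_def insert_commute)
  have G: "\<gamma>1 \<in> B" "\<gamma>2 \<in> B" using g1 g2 t1 t2 by auto
  have nx: "\<And>p. p \<in> {p1,q1} \<Longrightarrow> p \<noteq> x" using blockB[OF g1(1)] g1(2) by auto
  have dis: "\<And>p. p \<in> {p1,q1} \<Longrightarrow> p \<in> {p2,q2} \<Longrightarrow> False"
  proof -
    fix p assume "p \<in> {p1,q1}" "p \<in> {p2,q2}"
    then have "\<gamma>1 = \<gamma>2" using uniq[OF G E1 E2] nx by blast
    thus False using s by simp
  qed
  have all: "\<forall>p. Zr p x \<longrightarrow> p \<in> {p1,q1,p2,q2}"
  proof (intro allI impI)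
    fix p assume "Zr p x"
    then obtain y u where b: "blk p y x u" using Zr_blk by blast
    hence "\<exists>\<gamma>\<in>slb x. p = fst \<gamma> \<or> p = fst (snd \<gamma>)"
      unfolding blk_def slb_def by (elim disjE) force+
    thus "p \<in> {p1,q1,p2,q2}" using s t1 t2 by auto
  qed
  show ?thesis using k1 k2 dis all by blast
qed

definition closed :: "'a set \<Rightarrow> bool" where
  "closed C \<longleftrightarrow> C \<subseteq> X \<and> (\<forall>x\<in>C. \<forall>y. adj x y \<longrightarrow> y \<in> C)"

lemma closed_compl: "closed C \<Longrightarrow> closed (X - C)"
  unfolding closed_def by (meson DiffD1 DiffD2 DiffI adj_X adj_sym subset_iff Diff_subset)

lemma closed_facts:
  assumes cl: "closed C" and ne: "C \<noteq> {}"
  shows "4 dvd card C * (card C - 3) \<and> card C \<noteq> 4 \<and> 3 \<le> card C"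
proof -
  have CX: "C \<subseteq> X" using cl by (simp add: closed_def)
  have fC: "finite C" using CX finX finite_subset by blast
  let ?k = "card C"
  define Z where "Z x = {v\<in>C. Zr x v}" for x
  define P where "P x = {v\<in>C. Zr v x}" for x
  have split: "?k - 1 = 2 + card (Z x) + card (P x)" if x: "x \<in> C" for x
  proof -
    obtain y1 y2 where y: "y1 \<noteq> y2" "adj x y1" "adj x y2" "\<forall>y. adj x y \<longrightarrow> y = y1 \<or> y = y2"
      using nbx x CX by blast
    have yC: "y1 \<in> C" "y2 \<in> C" using cl x y by (auto simp: closed_def)
    have eq: "C - {x} = {y1,y2} \<union> Z x \<union> P x"
    proof
      show "C - {x} \<subseteq> {y1, y2} \<union> Z x \<union> P x"
      proof
        fix v assume v: "v \<in> C - {x}"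
        then have "adj x v \<or> Zr x v \<or> Zr v x" using Tri[of x v] CX x by blast
        thus "v \<in> {y1, y2} \<union> Z x \<union> P x" using v y by (auto simp: Z_def P_def)
      qed
    next
      show "{y1, y2} \<union> Z x \<union> P x \<subseteq> C - {x}"
        using yC y adj_X Zr_not_adj Zr_not_adj' Zr_asym by (auto simp: Z_def P_def) blast+
    qed
    have d1: "{y1,y2} \<inter> Z x = {}" using y Zr_not_adj by (auto simp: Z_def)
    have d2: "({y1,y2} \<union> Z x) \<inter> P x = {}" using y Zr_not_adj' Zr_asym by (auto simp: Z_def P_def)
    have "card (C - {x}) = card ({y1,y2} \<union> Z x) + card (P x)"
      unfolding eq by (rule card_Un_disjoint) (use fC d2 in \<open>auto simp: Z_def P_def\<close>)
    also have "card ({y1,y2} \<union> Z x) = 2 + card (Z x)"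
      using card_Un_disjoint[of "{y1,y2}" "Z x"] d1 y(1) fC by (simp add: Z_def)
    finally show ?thesis using x fC by simp
  qed
  have ev: "even (card (P x))" if x: "x \<in> C" for x
  proof -
    obtain p1 q1 t1 p2 q2 t2 where s: "blk p1 q1 x t1" "blk p2 q2 x t2"
      "p1 \<noteq> p2" "p1 \<noteq> q2" "q1 \<noteq> p2" "q1 \<noteq> q2" "\<forall>p. Zr p x \<longrightarrow> p \<in> {p1,q1,p2,q2}"
      using slx x CX by blast
    have n1: "p1 \<noteq> q1" "p2 \<noteq> q2" using blk_X s(1,2) by blast+
    have z: "Zr p1 x" "Zr q1 x" "Zr p2 x" "Zr q2 x" using blk_Zr s(1,2) by blast+
    have a1: "p1 \<in> C \<longleftrightarrow> q1 \<in> C" using cl blk_adj[OF s(1)] adj_sym by (auto simp: closed_def)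
    have a2: "p2 \<in> C \<longleftrightarrow> q2 \<in> C" using cl blk_adj[OF s(2)] adj_sym by (auto simp: closed_def)
    have "P x = (if p1 \<in> C then {p1,q1} else {}) \<union> (if p2 \<in> C then {p2,q2} else {})"
      using s(7) z a1 a2 by (auto simp: P_def)
    thus ?thesis using n1 s(3-6) by auto
  qed
  have sw: "(\<Sum>x\<in>C. card (Z x)) = (\<Sum>x\<in>C. card (P x))"
    unfolding Z_def P_def by (rule swap_card[OF fC fC])
  have "(\<Sum>x\<in>C. ?k - 1) = (\<Sum>x\<in>C. 2 + card (Z x) + card (P x))"
    using split by (rule sum.cong[OF refl])
  hence tot: "?k * (?k - 1) = 2 * ?k + 2 * (\<Sum>x\<in>C. card (P x))"
    unfolding sum.distrib sw by simp
  have evs: "even (\<Sum>x\<in>C. card (P x))" using ev by (simp add: dvd_sum)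
  obtain x where x: "x \<in> C" using ne by blast
  obtain y1 y2 where y: "y1 \<noteq> y2" "adj x y1" "adj x y2"
    using nbx x CX by blast
  have "{x,y1,y2} \<subseteq> C" using cl x y by (auto simp: closed_def)
  moreover have "card {x,y1,y2} = 3" using y adj_X by auto
  ultimately have k3: "3 \<le> ?k" using card_mono[OF fC] by metis
  have "?k * (?k - 3) = 2 * (\<Sum>x\<in>C. card (P x))"
  proof -
    have "?k * (?k - 1) = ?k * (?k - 3) + 2 * ?k"
    proof -
      obtain m where "?k = m + 3" using k3 by (metis add.commute le_add_diff_inverse)
      thus ?thesis by (simp add: algebra_simps)
    qed
    thus ?thesis using tot by simp
  qed
  hence d4: "4 dvd ?k * (?k - 3)" using evs by auto
  have n4: "?k \<noteq> 4"
  proof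
    assume k4: "?k = 4"
    have "\<forall>x\<in>C. card (P x) = 0 \<and> card (Z x) = 1"
    proof
      fix x assume x: "x \<in> C"
      have "card (Z x) + card (P x) = 1" using split[OF x] k4 by simp
      thus "card (P x) = 0 \<and> card (Z x) = 1" using ev[OF x] by presburger
    qed
    hence "(\<Sum>x\<in>C. card (Z x)) = 4" "(\<Sum>x\<in>C. card (P x)) = 0" using k4 by simp_all
    thus False using sw by simp
  qed
  show ?thesis using d4 n4 k3 by blast
qed

end



context D11 begin

lemma forceP: "v \<in> X \<Longrightarrow> x \<in> X \<Longrightarrow> v \<noteq> x \<Longrightarrow> \<not> adj x v \<Longrightarrow> \<not> Zr x v \<Longrightarrow> Zr v x"
  using Tri by blast

lemma partner: "Zr v x \<Longrightarrow> adj v p \<Longrightarrow> adj v q \<Longrightarrow> p \<noteq> q \<Longrightarrow> (\<exists>t. blk v p x t) \<or> (\<exists>t. blk v q x t)"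
proof -
  assume a: "Zr v x" "adj v p" "adj v q" "p \<noteq> q"
  then obtain y t where b: "blk v y x t" using Zr_blk by blast
  have "y = p \<or> y = q" using nbr2[OF a(2,3,4) blk_adj[OF b]] .
  thus ?thesis using b by blast
qed

lemma forcepart: "Zr v x \<Longrightarrow> adj v p \<Longrightarrow> adj v q \<Longrightarrow> p \<noteq> q \<Longrightarrow> adj p x \<or> Zr x p \<Longrightarrow> \<exists>t. blk v q x t"
proof -
  assume a: "Zr v x" "adj v p" "adj v q" "p \<noteq> q" "adj p x \<or> Zr x p"
  from partner[OF a(1-4)] show ?thesis
  proof
    assume "\<exists>t. blk v p x t"
    then obtain t where "blk v p x t" by blast
    hence "Zr p x" using blk_Zr by blast
    thus ?thesis using a(5) Zr_not_adj Zr_asym by blast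
  qed
qed

lemma kill: "Zr v x \<Longrightarrow> adj v p \<Longrightarrow> adj v q \<Longrightarrow> p \<noteq> q \<Longrightarrow> adj p x \<or> Zr x p \<Longrightarrow> adj q x \<or> Zr x q \<Longrightarrow> False"
proof -
  assume a: "Zr v x" "adj v p" "adj v q" "p \<noteq> q" "adj p x \<or> Zr x p" "adj q x \<or> Zr x q"
  from forcepart[OF a(1-5)] obtain t where "blk v q x t" by blast
  hence "Zr q x" using blk_Zr by blast
  thus False using a(6) Zr_not_adj Zr_asym by blast
qed

lemma cap3: "blk x y z u \<Longrightarrow> blk x y z' u' \<Longrightarrow> blk x y z'' u'' \<Longrightarrow> z \<noteq> z' \<Longrightarrow> z \<noteq> z'' \<Longrightarrow> z' \<noteq> z'' \<Longrightarrow> False"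
proof -
  assume a: "blk x y z u" "blk x y z' u'" "blk x y z'' u''" "z \<noteq> z'" "z \<noteq> z''" "z' \<noteq> z''"
  have "{z,u} = {z',u'}" "{z,u} = {z'',u''}" using U1 a(1-3) by blast+
  thus False using a(4-6) by (auto simp: doubleton_eq_iff)
qed

lemma core:
  assumes dist: "distinct [s1,s2,s3,g,h,a,b,x1,x2,x3,x4]"
    and Xeq: "X = {s1,s2,s3,g,h,a,b,x1,x2,x3,x4}"
    and A: "adj s1 s2" "adj s1 s3" "adj s2 s3" "adj g h" "adj g a" "adj h b" "adj b x1"
      "adj x1 x2" "adj x2 x3" "adj x3 x4" "adj x4 a"
    and K: "blk s1 s2 a b" "blk s1 s3 x1 x2" "blk s2 s3 x3 x4" "blk g h s1 s2"
      "blk g a s3 w" "blk h b s3 w'"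
  shows False
proof -
  note S = adj_sym
  have N: "\<And>v p q y. adj v p \<Longrightarrow> adj v q \<Longrightarrow> p \<noteq> q \<Longrightarrow> adj v y \<Longrightarrow> y = p \<or> y = q"
    using nbr2 by blast
  note d = dist[simplified]
  have Ns1: "\<And>y. adj s1 y \<Longrightarrow> y = s2 \<or> y = s3" using N[OF A(1) A(2)] d by blast
  have Ns2: "\<And>y. adj s2 y \<Longrightarrow> y = s1 \<or> y = s3" using N[OF S[OF A(1)] A(3)] d by blast
  have Ns3: "\<And>y. adj s3 y \<Longrightarrow> y = s1 \<or> y = s2" using N[OF S[OF A(2)] S[OF A(3)]] d by blast
  have Ng: "\<And>y. adj g y \<Longrightarrow> y = h \<or> y = a" using N[OF A(4) A(5)] d by blast
  have Nh: "\<And>y. adj h y \<Longrightarrow> y = g \<or> y = b" using N[OF S[OF A(4)] A(6)] d by blast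
  have Na: "\<And>y. adj a y \<Longrightarrow> y = g \<or> y = x4" using N[OF S[OF A(5)] S[OF A(11)]] d by blast
  have Nb: "\<And>y. adj b y \<Longrightarrow> y = h \<or> y = x1" using N[OF S[OF A(6)] A(7)] d by blast
  have Nx1: "\<And>y. adj x1 y \<Longrightarrow> y = b \<or> y = x2" using N[OF S[OF A(7)] A(8)] d by blast
  have Nx2: "\<And>y. adj x2 y \<Longrightarrow> y = x1 \<or> y = x3" using N[OF S[OF A(8)] A(9)] d by blast
  have Nx3: "\<And>y. adj x3 y \<Longrightarrow> y = x2 \<or> y = x4" using N[OF S[OF A(9)] A(10)] d by blast
  have Nx4: "\<And>y. adj x4 y \<Longrightarrow> y = x3 \<or> y = a" using N[OF S[OF A(10)] A(11)] d by blast
  have inX: "s1 \<in> X" "s2 \<in> X" "s3 \<in> X" "g \<in> X" "h \<in> X" "a \<in> X" "b \<in> X" "x1 \<in> X" "x2 \<in> X" "x3 \<in> X" "x4 \<in> X"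
    using Xeq by auto
  have Zg: "\<And>v. Zr g v \<Longrightarrow> v \<in> {s1,s2,s3,w}"
    using Zr_via[OF _ _ K(4) K(5)] d by blast
  have Zh: "\<And>v. Zr h v \<Longrightarrow> v \<in> {s1,s2,s3,w'}"
    using Zr_via[OF _ _ blk_sym1[OF K(4)] K(6)] d by blast
  have Zs1: "\<And>v. Zr s1 v \<Longrightarrow> v \<in> {a,b,x1,x2}"
    using Zr_via[OF _ _ K(1) K(2)] d by blast
  have Zs2: "\<And>v. Zr s2 v \<Longrightarrow> v \<in> {a,b,x3,x4}"
    using Zr_via[OF _ _ blk_sym1[OF K(1)] K(3)] d by blast
  have wX: "w \<in> X" "w \<noteq> g" "w \<noteq> a" "w \<noteq> s3" using blk_X[OF K(5)] by auto
  have w1: "\<not> adj g w" using U2[OF blk_sym2[OF K(5)]] .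
  have w2: "\<not> adj a w" using U2[OF blk_sym2[OF blk_sym1[OF K(5)]]] .
  have w3: "w \<noteq> s1"
  proof
    assume "w = s1"
    hence "blk g a s1 s3" using blk_sym2[OF K(5)] by simp
    from U3[OF K(4) this] d show False by simp
  qed
  have w4: "w \<noteq> s2"
  proof
    assume "w = s2"
    hence "blk g a s2 s3" using blk_sym2[OF K(5)] by simp
    from U3[OF blk_sym2[OF K(4)] this] d show False by simp
  qed
  have "w \<in> {b,x1,x2,x3}" using wX w1 w2 w3 w4 Xeq A(4) A(11) S by auto
  have w'X: "w' \<in> X" "w' \<noteq> h" "w' \<noteq> b" "w' \<noteq> s3" using blk_X[OF K(6)] by auto
  have w'1: "\<not> adj h w'" using U2[OF blk_sym2[OF K(6)]] .
  have w'2: "\<not> adj b w'" using U2[OF blk_sym2[OF blk_sym1[OF K(6)]]] .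
  have w'3: "w' \<noteq> s1"
  proof
    assume "w' = s1"
    hence "blk h b s1 s3" using blk_sym2[OF K(6)] by simp
    from U3[OF blk_sym1[OF K(4)] this] d show False by simp
  qed
  have w'4: "w' \<noteq> s2"
  proof
    assume "w' = s2"
    hence "blk h b s2 s3" using blk_sym2[OF K(6)] by simp
    from U3[OF blk_sym2[OF blk_sym1[OF K(4)]] this] d show False by simp
  qed
  have "w' \<in> {a,x2,x3,x4}" using w'X w'1 w'2 w'3 w'4 Xeq A(4) A(7) S by auto
  have AS: "adj s2 s1" "adj s3 s1" "adj s3 s2" "adj h g" "adj a g" "adj b h" "adj x1 b"
      "adj x2 x1" "adj x3 x2" "adj x4 x3" "adj a x4" using A S by blast+
  have Zs3: "Zr g s3" "Zr g w" "Zr a s3" "Zr a w" "Zr h s3" "Zr h w'" "Zr b s3" "Zr b w'"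
    "Zr s1 a" "Zr s1 b" "Zr s2 a" "Zr s2 b" "Zr s1 x1" "Zr s1 x2" "Zr s3 x1" "Zr s3 x2"
    "Zr s2 x3" "Zr s2 x4" "Zr s3 x3" "Zr s3 x4" "Zr g s1" "Zr g s2" "Zr h s1" "Zr h s2"
    using blk_Zr K by blast+
  have W: "w = b \<or> w = x1 \<or> w = x2 \<or> w = x3" using \<open>w \<in> {b,x1,x2,x3}\<close> by simp
  have W': "w' = a \<or> w' = x2 \<or> w' = x3 \<or> w' = x4" using \<open>w' \<in> {a,x2,x3,x4}\<close> by simp
  have "Zr x1 h" by (rule forceP) (use inX d Nh Zh W' in auto)
  from forcepart[OF this S[OF A(7)] A(8)] obtain t2 where bh: "blk x1 x2 h t2" using d A(6) A AS by force
  have "Zr x1 s2" by (rule forceP) (use inX d Ns2 Zs2 in auto)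
  from forcepart[OF this S[OF A(7)] A(8)] obtain t where bs2: "blk x1 x2 s2 t" using d Zs3 A AS by force
  have "Zr x3 s1" by (rule forceP) (use inX d Ns1 Zs1 in auto)
  from forcepart[OF this S[OF A(9)] A(10)] obtain t' where bs1: "blk x3 x4 s1 t'" using d Zs3 A AS by force
  consider "w = b" | "w = x1" | "w = x2" | "w = x3" using W by blast
  then show False
  proof cases
    case 1
    have "Zr x1 g" by (rule forceP) (use inX d Ng Zg 1 in auto)
    from forcepart[OF this S[OF A(7)] A(8)] obtain t1 where "blk x1 x2 g t1" using d Zs3 1 A AS by force
    from cap3[OF bs2 this bh] d show False by simp
  next
    case 2
    have "Zr b g" by (rule forceP) (use inX d Ng Zg 2 in auto)
    from kill[OF this S[OF A(6)] A(7)] show False using d A(4) Zs3 2 A AS by force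
  next
    case 4
    have "Zr x4 g" by (rule forceP) (use inX d Ng Zg 4 in auto)
    from kill[OF this A(11) S[OF A(10)]] show False using d A(5) Zs3 4 S A AS by force
  next
    case 3
    have "Zr x4 g" by (rule forceP) (use inX d Ng Zg 3 in auto)
    from forcepart[OF this A(11) S[OF A(10)]] obtain t1 where "blk x4 x3 g t1" using d A(5) S A AS by force
    hence bg: "blk x3 x4 g t1" by (rule blk_sym1)
    consider "w' = a" | "w' = x2" | "w' = x3" | "w' = x4" using W' by blast
    then show False
    proof cases
      case 1
      have "Zr x4 h" by (rule forceP) (use inX d Nh Zh 1 in auto)
      from forcepart[OF this A(11) S[OF A(10)]] obtain t3 where "blk x4 x3 h t3" using d Zs3 1 A AS by force
      hence "blk x3 x4 h t3" by (rule blk_sym1)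
      from cap3[OF bs1 bg this] d show False by simp
    next
      case 2
      have "Zr x1 h" by (rule forceP) (use inX d Nh Zh 2 in auto)
      from kill[OF this S[OF A(7)] A(8)] show False using d A(6) Zs3 2 A AS by force
    next
      case 4
      have "Zr a h" by (rule forceP) (use inX d Nh Zh 4 in auto)
      from kill[OF this S[OF A(5)] S[OF A(11)]] show False using d A(4) Zs3 4 A AS by force
    next
      case 5: 3
      have "Zr x4 h" by (rule forceP) (use inX d Nh Zh 5 in auto)
      from forcepart[OF this S[OF A(10)] A(11)] obtain q where bq: "blk x4 a h q" using d Zs3 5 A AS by force
      have ka1: "blk a g s3 x2" using blk_sym1[OF K(5)] 3 by simp
      have ka2: "blk a x4 h q" using blk_sym1[OF bq] .
      have Za: "\<And>v. Zr a v \<Longrightarrow> v \<in> {s3,x2,h,q}" using Zr_via[OF _ _ ka1 ka2] d by blast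
      have qX: "q \<in> X" "q \<noteq> x4" "q \<noteq> a" "q \<noteq> h" using blk_X[OF bq] by auto
      have q1: "q \<noteq> x3" using U2[OF blk_sym2[OF bq]] A(10) S by blast
      have q2: "q \<noteq> g" using U2[OF blk_sym2[OF ka2]] AS(5) by blast
      have q3: "q \<noteq> s3"
      proof
        assume "q = s3" hence "blk a x4 s3 h" using blk_sym2[OF ka2] by simp
        from U3[OF ka1 this] d show False by simp
      qed
      have q4: "q \<noteq> x2"
      proof
        assume "q = x2" hence "blk a x4 x2 h" using blk_sym2[OF ka2] by simp
        from U3[OF blk_sym2[OF ka1] this] d show False by simp
      qed
      have q5: "q \<noteq> s1"
      proof
        assume "q = s1" hence "blk x4 a s1 h" using blk_sym2[OF bq] by simp
        from U3[OF blk_sym1[OF bs1] this] d show False by simp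
      qed
      have q6: "q \<noteq> s2"
      proof
        assume "q = s2" hence "Zr a s2" using blk_Zr[OF ka2] by simp
        thus False using Zs3 Zr_asym by blast
      qed
      have "q = b \<or> q = x1" using qX q1 q2 q3 q4 q5 q6 Xeq by auto
      then show False
      proof
        assume qb: "q = b"
        have "Zr x1 a" by (rule forceP) (use inX d Na Za qb in auto)
        from kill[OF this S[OF A(7)] A(8)] show False using d blk_Zr[OF ka2] qb blk_Zr[OF ka1] A AS by force
      next
        assume qx: "q = x1"
        have "Zr b a" by (rule forceP) (use inX d Na Za qx in auto)
        from kill[OF this S[OF A(6)] A(7)] show False using d blk_Zr[OF ka2] qx A AS by force
      qed
    qed
  qed
qed

end



context D11 begin

lemma mid3:
  assumes dist: "distinct [s1,s2,s3,g,h,a,b,c,d,e,f]"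
    and Xeq: "X = {s1,s2,s3,g,h,a,b,c,d,e,f}"
    and A: "adj s1 s2" "adj s1 s3" "adj s2 s3" "adj g h" "adj g a" "adj h b" "adj c d" "adj e f"
      "adj a c" "adj b e"
    and K: "blk s1 s2 a b" "blk s1 s3 c d" "blk s2 s3 e f" "blk g h s1 s2"
      "blk g a s3 w" "blk h b s3 w'"
  shows False
proof -
  note S = adj_sym
  note d = dist[simplified]
  obtain y1 y2 where y: "y1 \<noteq> y2" "adj f y1" "adj f y2" "\<forall>y. adj f y \<longrightarrow> y = y1 \<or> y = y2"
    using nbx adj_X[OF A(8)] by blast
  obtain y where yy: "adj f y" "y \<noteq> e" using y by metis
  have N: "\<And>v p q y. adj v p \<Longrightarrow> adj v q \<Longrightarrow> p \<noteq> q \<Longrightarrow> adj v y \<Longrightarrow> y = p \<or> y = q"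
    using nbr2 by blast
  have yX: "y \<in> X" "y \<noteq> f" using adj_X[OF yy(1)] by auto
  have n1: "y \<noteq> s1" using N[OF A(1) A(2), of f] S[OF yy(1)] d by blast
  have n2: "y \<noteq> s2" using N[OF S[OF A(1)] A(3), of f] S[OF yy(1)] d by blast
  have n3: "y \<noteq> s3" using N[OF S[OF A(2)] S[OF A(3)], of f] S[OF yy(1)] d by blast
  have n4: "y \<noteq> g" using N[OF A(4) A(5), of f] S[OF yy(1)] d by blast
  have n5: "y \<noteq> h" using N[OF S[OF A(4)] A(6), of f] S[OF yy(1)] d by blast
  have n6: "y \<noteq> a" using N[OF S[OF A(5)] A(9), of f] S[OF yy(1)] d by blast
  have n7: "y \<noteq> b" using N[OF S[OF A(6)] A(10), of f] S[OF yy(1)] d by blast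
  have n8: "y \<noteq> c" using N[OF A(7) S[OF A(9)], of f] S[OF yy(1)] d by blast
  have "y = d" using yX n1 n2 n3 n4 n5 n6 n7 n8 yy(2) Xeq by auto
  hence fd: "adj f d" using yy(1) by simp
  have d': "distinct [s2,s1,s3,g,h,a,b,e,f,d,c]" using d by (simp, blast)
  have X': "X = {s2,s1,s3,g,h,a,b,e,f,d,c}" unfolding Xeq by blast
  show False
    by (rule core[OF d' X' S[OF A(1)] A(3) A(2) A(4) A(5) A(6) A(10) A(8) fd S[OF A(7)] S[OF A(9)]
       blk_sym1[OF K(1)] K(3) blk_sym2[OF K(2)] blk_sym2[OF K(4)] K(5) K(6)])
qed

end



context D11 begin

lemma closed_nbrs: "C \<subseteq> X \<Longrightarrow> (\<And>x. x\<in>C \<Longrightarrow> \<exists>p\<in>C. \<exists>q\<in>C. p\<noteq>q \<and> adj x p \<and> adj x q) \<Longrightarrow> closed C"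
  unfolding closed_def using nbr2 by metis

lemma closed_of: "C \<subseteq> X \<Longrightarrow> (\<And>x y. x \<in> C \<Longrightarrow> adj x y \<Longrightarrow> y \<in> C) \<Longrightarrow> closed C"
  unfolding closed_def by blast

lemma noclosed: "closed C \<Longrightarrow> card C = 4 \<or> card C = 5 \<or> card C = 6 \<Longrightarrow> False"
proof -
  assume a: "closed C" "card C = 4 \<or> card C = 5 \<or> card C = 6"
  hence "C \<noteq> {}" by auto
  from closed_facts[OF a(1) this] a(2) show False by auto
qed

lemma mid2:
  assumes dist: "distinct [s1,s2,s3,g,h,a,b,c,d,e,f]"
    and Xeq: "X = {s1,s2,s3,g,h,a,b,c,d,e,f}"
    and A: "adj s1 s2" "adj s1 s3" "adj s2 s3" "adj g h" "adj g a" "adj h b"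
    and K: "blk s1 s2 a b" "blk s1 s3 c d" "blk s2 s3 e f" "blk g h s1 s2"
      "blk g a s3 w" "blk h b s3 w'"
  shows False
proof -
  note S = adj_sym
  note dd = dist[simplified]
  have N: "\<And>v p q y. adj v p \<Longrightarrow> adj v q \<Longrightarrow> p \<noteq> q \<Longrightarrow> adj v y \<Longrightarrow> y = p \<or> y = q"
    using nbr2 by blast
  have inX: "s1 \<in> X" "s2 \<in> X" "s3 \<in> X" "g \<in> X" "h \<in> X" "a \<in> X" "b \<in> X" "c \<in> X" "d \<in> X" "e \<in> X" "f \<in> X"
    using Xeq by auto
  have Ns1: "\<And>y. adj s1 y \<Longrightarrow> y = s2 \<or> y = s3" using N[OF A(1) A(2)] dd by blast
  have Ns2: "\<And>y. adj s2 y \<Longrightarrow> y = s1 \<or> y = s3" using N[OF S[OF A(1)] A(3)] dd by blast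
  have Ns3: "\<And>y. adj s3 y \<Longrightarrow> y = s1 \<or> y = s2" using N[OF S[OF A(2)] S[OF A(3)]] dd by blast
  have Ng: "\<And>y. adj g y \<Longrightarrow> y = h \<or> y = a" using N[OF A(4) A(5)] dd by blast
  have Nh: "\<And>y. adj h y \<Longrightarrow> y = g \<or> y = b" using N[OF S[OF A(4)] A(6)] dd by blast
  have Zs1: "\<And>v. Zr s1 v \<Longrightarrow> v \<in> {a,b,c,d}"
    using Zr_via[OF _ _ K(1) K(2)] dd by blast
  have Zs2: "\<And>v. Zr s2 v \<Longrightarrow> v \<in> {a,b,e,f}"
    using Zr_via[OF _ _ blk_sym1[OF K(1)] K(3)] dd by blast
  have Zs: "Zr s1 a" "Zr s1 b" "Zr s2 a" "Zr s2 b" "Zr s1 c" "Zr s1 d" "Zr s3 c" "Zr s3 d"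
    "Zr s2 e" "Zr s2 f" "Zr s3 e" "Zr s3 f" using blk_Zr K by blast+
  have "Zr c s2" by (rule forceP) (use inX dd Ns2 Zs2 in auto)
  then obtain y t where bc: "blk c y s2 t" using Zr_blk by blast
  have cy: "y \<in> X" "y \<noteq> c" "y \<noteq> s2" "\<not> adj y s2" "Zr y s2"
    using blk_X[OF bc] U2[OF blk_sym1[OF bc]] blk_Zr[OF bc] by auto
  have cy2: "y \<noteq> g"
  proof assume "y = g" from U3[OF blk_sym2[OF K(4)] blk_sym1[OF bc[unfolded this]]] dd show False by simp qed
  have cy3: "y \<noteq> h"
  proof assume "y = h" from U3[OF blk_sym2[OF blk_sym1[OF K(4)]] blk_sym1[OF bc[unfolded this]]] dd show False by simp qed
  have cy4: "\<not> Zr s2 y" using cy(5) Zr_asym by blast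
  have "y = d" using cy cy2 cy3 cy4 Zs A(1) S[OF A(3)] Xeq by auto
  hence Acd: "adj c d" using blk_adj[OF bc] by simp
  have "Zr e s1" by (rule forceP) (use inX dd Ns1 Zs1 in auto)
  then obtain y' t' where be: "blk e y' s1 t'" using Zr_blk by blast
  have ey: "y' \<in> X" "y' \<noteq> e" "y' \<noteq> s1" "\<not> adj y' s1" "Zr y' s1"
    using blk_X[OF be] U2[OF blk_sym1[OF be]] blk_Zr[OF be] by auto
  have ey2: "y' \<noteq> g"
  proof assume "y' = g" from U3[OF K(4) blk_sym1[OF be[unfolded this]]] dd show False by simp qed
  have ey3: "y' \<noteq> h"
  proof assume "y' = h" from U3[OF blk_sym1[OF K(4)] blk_sym1[OF be[unfolded this]]] dd show False by simp qed
  have ey4: "\<not> Zr s1 y'" using ey(5) Zr_asym by blast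
  have "y' = f" using ey ey2 ey3 ey4 Zs S[OF A(1)] S[OF A(2)] Xeq by auto
  hence Aef: "adj e f" using blk_adj[OF be] by simp
  obtain x4 where x4: "adj a x4" "x4 \<noteq> g"
    using nbx[OF inX(6)] by metis
  obtain x1 where x1: "adj b x1" "x1 \<noteq> h"
    using nbx[OF inX(7)] by metis
  have nab: "\<not> adj a b"
  proof
    assume ab: "adj a b"
    have "closed {g,h,a,b}"
    proof (rule closed_of)
      show "{g,h,a,b} \<subseteq> X" using inX by blast
    next
      have Na: "\<And>y. adj a y \<Longrightarrow> y = g \<or> y = b" using N[OF S[OF A(5)] ab] dd by blast
      have Nb: "\<And>y. adj b y \<Longrightarrow> y = h \<or> y = a" using N[OF S[OF A(6)] S[OF ab]] dd by blast
      fix x y assume "x \<in> {g,h,a,b}" "adj x y"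
      then show "y \<in> {g,h,a,b}"
        using Ng Nh Na Nb by (elim insertE emptyE) blast+
    qed
    moreover have "card {g,h,a,b} = 4" using dd by simp
    ultimately show False using noclosed by blast
  qed
  have x4X: "x4 \<in> X" "x4 \<noteq> a" using adj_X[OF x4(1)] by auto
  have x1X: "x1 \<in> X" "x1 \<noteq> b" using adj_X[OF x1(1)] by auto
  have x4c: "x4 \<in> {c,d,e,f}"
    using x4X x4 S[OF x4(1)] Xeq Ns1 Ns2 Ns3 Nh nab dd by auto
  have x1c: "x1 \<in> {c,d,e,f}"
    using x1X x1 S[OF x1(1)] S[OF A(5)] Xeq Ns1 Ns2 Ns3 Ng nab dd by auto
  have x14: "x1 \<noteq> x4"
  proof
    assume e: "x1 = x4"
    have "closed {g,h,a,b,x1}"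
    proof (rule closed_of)
      show "{g,h,a,b,x1} \<subseteq> X" using inX x1X by blast
    next
      have ax1: "adj x1 a" using x4(1) e S by blast
      have Na: "\<And>y. adj a y \<Longrightarrow> y = g \<or> y = x1" using N[OF S[OF A(5)] x4(1)] x4(2) e by blast
      have Nb: "\<And>y. adj b y \<Longrightarrow> y = h \<or> y = x1" using N[OF S[OF A(6)] x1(1)] x1(2) by blast
      have Nx: "\<And>y. adj x1 y \<Longrightarrow> y = b \<or> y = a" using N[OF S[OF x1(1)] ax1] dd by blast
      fix x y assume "x \<in> {g,h,a,b,x1}" "adj x y"
      then show "y \<in> {g,h,a,b,x1}"
        using Ng Nh Na Nb Nx by (elim insertE emptyE) blast+
    qed
    moreover have "card {g,h,a,b,x1} = 5" using dd x1c by auto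
    ultimately show False using noclosed by blast
  qed
  have six: "False" if "p \<noteq> q" "p \<in> {c,d,e,f}" "q \<in> {c,d,e,f}" "adj a p" "adj b q" "adj p q" for p q
  proof -
    have pq: "p \<in> X" "q \<in> X" "p \<noteq> g" "p \<noteq> h" "p \<noteq> a" "p \<noteq> b" "q \<noteq> g" "q \<noteq> h" "q \<noteq> a" "q \<noteq> b"
      using that(2,3) inX dd by auto
    have "closed {g,h,a,b,p,q}"
    proof (rule closed_of)
      show "{g,h,a,b,p,q} \<subseteq> X" using inX pq by blast
    next
      have Na: "\<And>y. adj a y \<Longrightarrow> y = g \<or> y = p" using N[OF S[OF A(5)] that(4)] pq by blast
      have Nb: "\<And>y. adj b y \<Longrightarrow> y = h \<or> y = q" using N[OF S[OF A(6)] that(5)] pq by blast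
      have Np: "\<And>y. adj p y \<Longrightarrow> y = a \<or> y = q" using N[OF S[OF that(4)] that(6)] pq by blast
      have Nq: "\<And>y. adj q y \<Longrightarrow> y = b \<or> y = p" using N[OF S[OF that(5)] S[OF that(6)]] pq by blast
      fix x y assume "x \<in> {g,h,a,b,p,q}" "adj x y"
      then show "y \<in> {g,h,a,b,p,q}"
        using Ng Nh Na Nb Np Nq by (elim insertE emptyE) blast+
    qed
    moreover have "card {g,h,a,b,p,q} = 6" using dd pq that(1) by auto
    ultimately show False using noclosed by blast
  qed
  have sd: "distinct [s2,s1,s3,g,h,a,b,e,f,c,d]" using dd by (simp, blast)
  have sX: "X = {s2,s1,s3,g,h,a,b,e,f,c,d}" unfolding Xeq by blast
  consider "x4 = c" | "x4 = d" | "x4 = e" | "x4 = f" using x4c by blast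
  then show False
  proof cases
    case 1
    have "x1 \<noteq> d"
    proof
      assume xx: "x1 = d"
      show False by (rule six[of c d]) (use dd x4 x1 1 xx Acd in auto)
    qed
    hence "x1 = e \<or> x1 = f" using x1c x14 1 by auto
    thus False
    proof
      assume x: "x1 = e"
      show False by (rule mid3[OF dist Xeq A(1-6) Acd Aef _ _ K]) (use x4 x1 1 x in auto)
    next
      assume x: "x1 = f"
      have d2: "distinct [s1,s2,s3,g,h,a,b,c,d,f,e]" using dd by (simp, blast)
      have X2: "X = {s1,s2,s3,g,h,a,b,c,d,f,e}" unfolding Xeq by blast
      show False by (rule mid3[OF d2 X2 A(1-6) Acd S[OF Aef] _ _ K(1,2) blk_sym2[OF K(3)] K(4-6)])
         (use x4 x1 1 x in auto)
    qed
  next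
    case 2
    have "x1 \<noteq> c"
    proof
      assume xx: "x1 = c"
      show False by (rule six[of d c]) (use dd x4 x1 2 xx S[OF Acd] in auto)
    qed
    hence "x1 = e \<or> x1 = f" using x1c x14 2 by auto
    thus False
    proof
      assume x: "x1 = e"
      have d2: "distinct [s1,s2,s3,g,h,a,b,d,c,e,f]" using dd by (simp, blast)
      have X2: "X = {s1,s2,s3,g,h,a,b,d,c,e,f}" unfolding Xeq by blast
      show False by (rule mid3[OF d2 X2 A(1-6) S[OF Acd] Aef _ _ K(1) blk_sym2[OF K(2)] K(3-6)])
         (use x4 x1 2 x in auto)
    next
      assume x: "x1 = f"
      have d2: "distinct [s1,s2,s3,g,h,a,b,d,c,f,e]" using dd by (simp, blast)
      have X2: "X = {s1,s2,s3,g,h,a,b,d,c,f,e}" unfolding Xeq by blast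
      show False by (rule mid3[OF d2 X2 A(1-6) S[OF Acd] S[OF Aef] _ _ K(1) blk_sym2[OF K(2)] blk_sym2[OF K(3)] K(4-6)])
         (use x4 x1 2 x in auto)
    qed
  next
    case 3
    have "x1 \<noteq> f"
    proof
      assume xx: "x1 = f"
      show False by (rule six[of e f]) (use dd x4 x1 3 xx Aef in auto)
    qed
    hence "x1 = c \<or> x1 = d" using x1c x14 3 by auto
    thus False
    proof
      assume x: "x1 = c"
      have d2: "distinct [s2,s1,s3,g,h,a,b,e,f,c,d]" using dd by (simp, blast)
      have X2: "X = {s2,s1,s3,g,h,a,b,e,f,c,d}" unfolding Xeq by blast
      show False by (rule mid3[OF d2 X2 S[OF A(1)] A(3) A(2) A(4-6) Aef Acd _ _ blk_sym1[OF K(1)] K(3) K(2)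
          blk_sym2[OF K(4)] K(5,6)])
         (use x4 x1 3 x in auto)
    next
      assume x: "x1 = d"
      have d2: "distinct [s2,s1,s3,g,h,a,b,e,f,d,c]" using dd by (simp, blast)
      have X2: "X = {s2,s1,s3,g,h,a,b,e,f,d,c}" unfolding Xeq by blast
      show False by (rule mid3[OF d2 X2 S[OF A(1)] A(3) A(2) A(4-6) Aef S[OF Acd] _ _ blk_sym1[OF K(1)] K(3)
          blk_sym2[OF K(2)] blk_sym2[OF K(4)] K(5,6)])
         (use x4 x1 3 x in auto)
    qed
  next
    case 4
    have "x1 \<noteq> e"
    proof
      assume xx: "x1 = e"
      show False by (rule six[of f e]) (use dd x4 x1 4 xx S[OF Aef] in auto)
    qed
    hence "x1 = c \<or> x1 = d" using x1c x14 4 by auto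
    thus False
    proof
      assume x: "x1 = c"
      have d2: "distinct [s2,s1,s3,g,h,a,b,f,e,c,d]" using dd by (simp, blast)
      have X2: "X = {s2,s1,s3,g,h,a,b,f,e,c,d}" unfolding Xeq by blast
      show False by (rule mid3[OF d2 X2 S[OF A(1)] A(3) A(2) A(4-6) S[OF Aef] Acd _ _ blk_sym1[OF K(1)]
          blk_sym2[OF K(3)] K(2) blk_sym2[OF K(4)] K(5,6)])
         (use x4 x1 4 x in auto)
    next
      assume x: "x1 = d"
      have d2: "distinct [s2,s1,s3,g,h,a,b,f,e,d,c]" using dd by (simp, blast)
      have X2: "X = {s2,s1,s3,g,h,a,b,f,e,d,c}" unfolding Xeq by blast
      show False by (rule mid3[OF d2 X2 S[OF A(1)] A(3) A(2) A(4-6) S[OF Aef] S[OF Acd] _ _ blk_sym1[OF K(1)]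
          blk_sym2[OF K(3)] blk_sym2[OF K(2)] blk_sym2[OF K(4)] K(5,6)])
         (use x4 x1 4 x in auto)
    qed
  qed
qed

end



context D11 begin

lemma mid:
  assumes dist: "distinct [s1,s2,s3,g,h,a,b,c,d,e,f]"
    and Xeq: "X = {s1,s2,s3,g,h,a,b,c,d,e,f}"
    and A: "adj s1 s2" "adj s1 s3" "adj s2 s3"
    and K: "blk s1 s2 a b" "blk s1 s3 c d" "blk s2 s3 e f" "blk g h s1 s2"
  shows False
proof -
  note S = adj_sym
  note dd = dist[simplified]
  have N: "\<And>v p q y. adj v p \<Longrightarrow> adj v q \<Longrightarrow> p \<noteq> q \<Longrightarrow> adj v y \<Longrightarrow> y = p \<or> y = q"
    using nbr2 by blast
  have inX: "s1 \<in> X" "s2 \<in> X" "s3 \<in> X" "g \<in> X" "h \<in> X" "a \<in> X" "b \<in> X" "c \<in> X" "d \<in> X" "e \<in> X" "f \<in> X"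
    using Xeq by auto
  have Ns1: "\<And>y. adj s1 y \<Longrightarrow> y = s2 \<or> y = s3" using N[OF A(1) A(2)] dd by blast
  have Ns2: "\<And>y. adj s2 y \<Longrightarrow> y = s1 \<or> y = s3" using N[OF S[OF A(1)] A(3)] dd by blast
  have Ns3: "\<And>y. adj s3 y \<Longrightarrow> y = s1 \<or> y = s2" using N[OF S[OF A(2)] S[OF A(3)]] dd by blast
  have Zs3: "\<And>v. Zr s3 v \<Longrightarrow> v \<in> {c,d,e,f}"
    using Zr_via[OF _ _ blk_sym1[OF K(2)] blk_sym1[OF K(3)]] dd by blast
  have Zs: "Zr s3 c" "Zr s3 d" "Zr s3 e" "Zr s3 f" using blk_Zr K by blast+
  have agh: "adj g h" using blk_adj[OF K(4)] .
  have "Zr g s3" by (rule forceP) (use inX dd Ns3 Zs3 in auto)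
  obtain al where al: "adj g al" "al \<noteq> h" using nbx[OF inX(4)] by metis
  from partner[OF \<open>Zr g s3\<close> agh al(1) al(2)[symmetric]]
  obtain w where bw: "blk g al s3 w"
  proof (elim disjE exE)
    fix t assume "blk g h s3 t"
    from U1[OF K(4) this] dd show ?thesis by (auto simp: doubleton_eq_iff)
  qed
  have "Zr h s3" by (rule forceP) (use inX dd Ns3 Zs3 in auto)
  obtain be where be: "adj h be" "be \<noteq> g" using nbx[OF inX(5)] by metis
  from partner[OF \<open>Zr h s3\<close> S[OF agh] be(1) be(2)[symmetric]]
  obtain w' where bw': "blk h be s3 w'"
  proof (elim disjE exE)
    fix t assume "blk h g s3 t"
    from U1[OF blk_sym1[OF K(4)] this] dd show ?thesis by (auto simp: doubleton_eq_iff)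
  qed
  have alX: "al \<in> X" "al \<noteq> g" using adj_X[OF al(1)] by auto
  have al1: "\<not> Zr s3 al" using blk_Zr[OF bw] Zr_asym by blast
  have al2: "al \<noteq> s1 \<and> al \<noteq> s2 \<and> al \<noteq> s3" using Ns1 Ns2 Ns3 S[OF al(1)] dd by blast
  have ala: "al = a \<or> al = b" using alX al(2) al1 al2 Zs Xeq by auto
  have beX: "be \<in> X" "be \<noteq> h" using adj_X[OF be(1)] by auto
  have be1: "\<not> Zr s3 be" using blk_Zr[OF bw'] Zr_asym by blast
  have be2: "be \<noteq> s1 \<and> be \<noteq> s2 \<and> be \<noteq> s3" using Ns1 Ns2 Ns3 S[OF be(1)] dd by blast
  have bea: "be = a \<or> be = b" using beX be(2) be1 be2 Zs Xeq by auto
  have ne: "al \<noteq> be"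
  proof
    assume "al = be"
    hence "blk al h s3 w'" using blk_sym1[OF bw'] by simp
    from U3[OF blk_sym1[OF bw] this] dd show False by simp
  qed
  show False
  proof (cases "al = a")
    case True
    hence "be = b" using bea ne by auto
    show False by (rule mid2[OF dist Xeq A agh _ _ K, of w w']) (use al be bw bw' True \<open>be = b\<close> in auto)
  next
    case False
    hence x: "al = b" "be = a" using ala bea ne by auto
    have d2: "distinct [s1,s2,s3,g,h,b,a,c,d,e,f]" using dd by (simp, blast)
    have X2: "X = {s1,s2,s3,g,h,b,a,c,d,e,f}" unfolding Xeq by blast
    show False by (rule mid2[OF d2 X2 A agh _ _ blk_sym2[OF K(1)] K(2-4), of w w'])
      (use al be bw bw' x in auto)
  qed
qed

lemma slotdisj: "blk x y z u \<Longrightarrow> blk x y' z' u' \<Longrightarrow> y \<noteq> y' \<Longrightarrow> z \<noteq> z' \<and> z \<noteq> u' \<and> u \<noteq> z' \<and> u \<noteq> u'"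
  using U3 blk_sym2 by metis

end



context D11 begin

lemma hz: "blk g n z u \<Longrightarrow> p \<in> {z,u} \<Longrightarrow> q \<in> {z,u} \<Longrightarrow> p \<noteq> q \<Longrightarrow> blk g n p q"
  using blk_sym2 by auto

lemma tri_free:
  assumes cl: "closed T" and c3: "card T = 3"
  shows False
proof -
  note S = adj_sym
  have TX: "T \<subseteq> X" using cl by (simp add: closed_def)
  have fT: "finite T" using TX finX finite_subset by blast
  obtain s1 where s1: "s1 \<in> T" using c3 by fastforce
  obtain s2 s3 where y: "s2 \<noteq> s3" "adj s1 s2" "adj s1 s3" "\<forall>y. adj s1 y \<longrightarrow> y = s2 \<or> y = s3"
    using nbx s1 TX by blast
  have yT: "s2 \<in> T" "s3 \<in> T" using cl s1 y by (auto simp: closed_def)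
  have n12: "s1 \<noteq> s2" "s1 \<noteq> s3" using adj_X y by auto
  have Teq: "T = {s1,s2,s3}"
  proof -
    have sub: "{s1,s2,s3} \<subseteq> T" using s1 yT by auto
    have "card {s1,s2,s3} = 3" using n12 y(1) by auto
    thus ?thesis using card_subset_eq[OF fT sub] c3 by simp
  qed
  obtain z1 z2 where z: "z1 \<noteq> z2" "adj s2 z1" "adj s2 z2"
    using nbx yT TX by blast
  have zT: "z1 \<in> T" "z2 \<in> T" using cl yT z by (auto simp: closed_def)
  have "z1 \<noteq> s2" "z2 \<noteq> s2" using adj_X z by auto
  hence A3: "adj s2 s3" using z zT Teq by auto
  note A = y(2) y(3) A3
  obtain a b where K1: "blk s1 s2 a b" using adj_blk y(2) by blast
  obtain c d where K2: "blk s1 s3 c d" using adj_blk y(3) by blast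
  obtain e f where K3: "blk s2 s3 e f" using adj_blk A3 by blast
  have dab: "a \<noteq> c \<and> a \<noteq> d \<and> b \<noteq> c \<and> b \<noteq> d" using slotdisj[OF K1 K2] y(1) by blast
  have dae: "a \<noteq> e \<and> a \<noteq> f \<and> b \<noteq> e \<and> b \<noteq> f" using slotdisj[OF blk_sym1[OF K1] K3] n12 by blast
  have dce: "c \<noteq> e \<and> c \<noteq> f \<and> d \<noteq> e \<and> d \<noteq> f"
    using slotdisj[OF blk_sym1[OF K2] blk_sym1[OF K3]] n12 by blast
  have x1: "a \<noteq> s3 \<and> b \<noteq> s3" using U2[OF K1] U2[OF blk_sym2[OF K1]] y(3) by blast
  have x2: "c \<noteq> s2 \<and> d \<noteq> s2" using U2[OF K2] U2[OF blk_sym2[OF K2]] y(2) by blast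
  have x3: "e \<noteq> s1 \<and> f \<noteq> s1" using U2[OF K3] U2[OF blk_sym2[OF K3]] S[OF y(2)] by blast
  have bx: "a \<noteq> s1 \<and> a \<noteq> s2 \<and> b \<noteq> s1 \<and> b \<noteq> s2 \<and> a \<noteq> b \<and> c \<noteq> s1 \<and> c \<noteq> s3 \<and> d \<noteq> s1 \<and> d \<noteq> s3 \<and> c \<noteq> d
     \<and> e \<noteq> s2 \<and> e \<noteq> s3 \<and> f \<noteq> s2 \<and> f \<noteq> s3 \<and> e \<noteq> f"
    using blk_X[OF K1] blk_X[OF K2] blk_X[OF K3] by blast
  have inX9: "{s1,s2,s3,a,b,c,d,e,f} \<subseteq> X" using blk_X[OF K1] blk_X[OF K2] blk_X[OF K3] by blast
  have d9: "distinct [s1,s2,s3,a,b,c,d,e,f]" using dab dae dce x1 x2 x3 bx n12 y(1) by auto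
  have c9: "card {s1,s2,s3,a,b,c,d,e,f} = 9"
    using distinct_card[OF d9] by simp
  have "card (X - {s1,s2,s3,a,b,c,d,e,f}) = 2"
    using card_Diff_subset[OF _ inX9] c9 cardX by (simp add: finite_subset[OF inX9 finX])
  then obtain g h where gh: "X - {s1,s2,s3,a,b,c,d,e,f} = {g,h}" "g \<noteq> h" by (auto simp: card_2_iff)
  have gh2: "g \<in> X" "h \<in> X" "g \<notin> {s1,s2,s3,a,b,c,d,e,f}" "h \<notin> {s1,s2,s3,a,b,c,d,e,f}"
    using gh(1) by blast+
  have Xeq: "X = {s1,s2,s3,a,b,c,d,e,f,g,h}" using gh(1) inX9 by blast
  have N: "\<And>v p q y. adj v p \<Longrightarrow> adj v q \<Longrightarrow> p \<noteq> q \<Longrightarrow> adj v y \<Longrightarrow> y = p \<or> y = q"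
    using nbr2 by blast
  have Ns1: "\<And>y. adj s1 y \<Longrightarrow> y = s2 \<or> y = s3" using N[OF A(1) A(2)] y(1) by blast
  have Ns2: "\<And>y. adj s2 y \<Longrightarrow> y = s1 \<or> y = s3" using N[OF S[OF A(1)] A(3)] n12 by blast
  have Ns3: "\<And>y. adj s3 y \<Longrightarrow> y = s1 \<or> y = s2" using N[OF S[OF A(2)] S[OF A(3)]] n12 by blast
  have Zs1: "\<And>v. Zr s1 v \<Longrightarrow> v \<in> {a,b,c,d}" using Zr_via[OF _ _ K1 K2] y(1) by blast
  have Zs2: "\<And>v. Zr s2 v \<Longrightarrow> v \<in> {a,b,e,f}" using Zr_via[OF _ _ blk_sym1[OF K1] K3] n12 by blast
  have Zs3: "\<And>v. Zr s3 v \<Longrightarrow> v \<in> {c,d,e,f}"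
    using Zr_via[OF _ _ blk_sym1[OF K2] blk_sym1[OF K3]] n12 by blast
  have gX: "g \<noteq> s1" "g \<noteq> s2" "g \<noteq> s3" "g \<noteq> a" "g \<noteq> b" "g \<noteq> c" "g \<noteq> d" "g \<noteq> e" "g \<noteq> f"
    using gh2 by auto
  have sX: "s1 \<in> X" "s2 \<in> X" "s3 \<in> X" using inX9 by auto
  have Zgs: "Zr g s1" "Zr g s2" "Zr g s3"
  proof -
    show "Zr g s1" by (rule forceP[OF gh2(1) sX(1) gX(1)]) (use Ns1 Zs1 gX in blast)+
    show "Zr g s2" by (rule forceP[OF gh2(1) sX(2) gX(2)]) (use Ns2 Zs2 gX in blast)+
    show "Zr g s3" by (rule forceP[OF gh2(1) sX(3) gX(3)]) (use Ns3 Zs3 gX in blast)+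
  qed
  obtain n1 n2 where nn: "n1 \<noteq> n2" "adj g n1" "adj g n2" using nbx gh2 by blast
  obtain p1 q1 where bg1: "blk g n1 p1 q1" using adj_blk nn by blast
  obtain p2 q2 where bg2: "blk g n2 p2 q2" using adj_blk nn by blast
  have mem: "s1 \<in> {p1,q1,p2,q2}" "s2 \<in> {p1,q1,p2,q2}" "s3 \<in> {p1,q1,p2,q2}"
    using Zr_via[OF _ nn(1) bg1 bg2] Zgs by blast+
  have "\<exists>n p q. blk g n p q \<and> p \<in> {s1,s2,s3} \<and> q \<in> {s1,s2,s3} \<and> p \<noteq> q"
  proof -
    have m1: "s1 \<in> {p1,q1} \<or> s1 \<in> {p2,q2}" "s2 \<in> {p1,q1} \<or> s2 \<in> {p2,q2}" "s3 \<in> {p1,q1} \<or> s3 \<in> {p2,q2}"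
      using mem by auto
    show ?thesis using m1 hz[OF bg1] hz[OF bg2] n12 y(1) by blast
  qed
  then obtain n p q where bn: "blk g n p q" "p \<in> {s1,s2,s3}" "q \<in> {s1,s2,s3}" "p \<noteq> q" by blast
  have "n = h"
  proof -
    have nX: "n \<in> X" "n \<noteq> g" "n \<noteq> p" "n \<noteq> q" using blk_X[OF bn(1)] by auto
    have na: "\<not> adj n p" "\<not> adj n q" using U2[OF blk_sym1[OF bn(1)]] U2[OF blk_sym2[OF blk_sym1[OF bn(1)]]] by auto
    have nz: "Zr n p" "Zr n q" using blk_Zr[OF bn(1)] by auto
    have tri: "\<And>u v. u \<in> {s1,s2,s3} \<Longrightarrow> v \<in> {s1,s2,s3} \<Longrightarrow> u \<noteq> v \<Longrightarrow> adj u v"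
      using A S by blast
    have nS: "n \<notin> {s1,s2,s3}" using tri[of n p] na nX bn by blast
    have zz: "Zr s1 a" "Zr s2 a" "Zr s1 b" "Zr s2 b" "Zr s1 c" "Zr s3 c" "Zr s1 d" "Zr s3 d"
      "Zr s2 e" "Zr s3 e" "Zr s2 f" "Zr s3 f" using blk_Zr K1 K2 K3 by blast+
    have nT: "n \<notin> {a,b,c,d,e,f}"
    proof
      assume "n \<in> {a,b,c,d,e,f}"
      then show False using nz zz Zr_asym bn(2-4) by (elim insertE emptyE; auto)
    qed
    show "n = h" using nX nS nT Xeq by auto
  qed
  hence bn': "blk g h p q" using bn by simp
  have gh3: "g \<noteq> s1" "g \<noteq> s2" "g \<noteq> s3" "g \<noteq> a" "g \<noteq> b" "g \<noteq> c" "g \<noteq> d" "g \<noteq> e" "g \<noteq> f"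
    "h \<noteq> s1" "h \<noteq> s2" "h \<noteq> s3" "h \<noteq> a" "h \<noteq> b" "h \<noteq> c" "h \<noteq> d" "h \<noteq> e" "h \<noteq> f"
    using gh2 by auto
  have D: "distinct [s1,s2,s3,g,h,a,b,c,d,e,f]" using d9 gh3 gh(2) by auto
  have "(p = s1 \<and> q = s2) \<or> (p = s2 \<and> q = s1) \<or> (p = s1 \<and> q = s3) \<or> (p = s3 \<and> q = s1)
      \<or> (p = s2 \<and> q = s3) \<or> (p = s3 \<and> q = s2)" using bn(2-4) by auto
  moreover have "blk g h s1 s2 \<Longrightarrow> False"
    by (rule mid[OF D _ A K1 K2 K3]) (use Xeq in auto)
  moreover have "blk g h s1 s3 \<Longrightarrow> False"
  proof -
    assume bb: "blk g h s1 s3"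
    have D2: "distinct [s1,s3,s2,g,h,c,d,a,b,f,e]" using D by (simp, blast)
    show False by (rule mid[OF D2 _ A(2) A(1) S[OF A(3)] K2 K1 blk_sym2[OF blk_sym1[OF K3]] bb])
      (use Xeq in auto)
  qed
  moreover have "blk g h s2 s3 \<Longrightarrow> False"
  proof -
    assume bb: "blk g h s2 s3"
    have D2: "distinct [s2,s3,s1,g,h,e,f,a,b,c,d]" using D by (simp, blast)
    show False by (rule mid[OF D2 _ A(3) S[OF A(1)] S[OF A(2)] K3 blk_sym1[OF K1] blk_sym1[OF K2] bb])
      (use Xeq in auto)
  qed
  ultimately show False using bn' blk_sym2 by blast
qed

end



primrec wk :: "('a \<Rightarrow> 'a \<Rightarrow> 'a) \<Rightarrow> 'a \<Rightarrow> 'a \<Rightarrow> nat \<Rightarrow> 'a \<times> 'a" where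
  "wk N x0 x1 0 = (x0,x1)"
| "wk N x0 x1 (Suc n) = (snd (wk N x0 x1 n), N (fst (wk N x0 x1 n)) (snd (wk N x0 x1 n)))"

context D11 begin

lemma closed_all: "closed C \<Longrightarrow> C \<noteq> {} \<Longrightarrow> C = X"
proof (rule ccontr)
  assume cl: "closed C" and ne: "C \<noteq> {}" and nX: "C \<noteq> X"
  have CX: "C \<subseteq> X" using cl by (simp add: closed_def)
  have fC: "finite C" using CX finX finite_subset by blast
  have cl2: "closed (X - C)" using closed_compl[OF cl] .
  have ne2: "X - C \<noteq> {}" using CX nX by blast
  have c2: "card (X - C) = 11 - card C" using card_Diff_subset[OF fC CX] cardX by simp
  have f1: "4 dvd card C * (card C - 3)" "card C \<noteq> 4" "3 \<le> card C" using closed_facts[OF cl ne] by auto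
  have f2: "4 dvd (11 - card C) * (11 - card C - 3)" "11 - card C \<noteq> 4" "3 \<le> 11 - card C"
    using closed_facts[OF cl2 ne2] c2 by auto
  have n3: "card C \<noteq> 3" using tri_free[OF cl] by blast
  have n8: "11 - card C \<noteq> 3" using tri_free[OF cl2] c2 by auto
  have "card C = 5 \<or> card C = 6" using f1(2,3) f2(2,3) n3 n8 by arith
  thus False using f1(1) by auto
qed

definition nxt :: "'a \<Rightarrow> 'a \<Rightarrow> 'a" where
  "nxt p c = (SOME y. adj c y \<and> y \<noteq> p)"

lemma nxt_prop: "adj c p \<Longrightarrow> adj c (nxt p c) \<and> nxt p c \<noteq> p"
proof -
  assume "adj c p"
  hence "c \<in> X" using adj_X by blast
  from nbx[OF this] have "\<exists>y. adj c y \<and> y \<noteq> p" by metis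
  thus ?thesis unfolding nxt_def by (rule someI_ex)
qed

lemma spine_adj: "spine_edges B = {{x,y} | x y. adj x y}"
proof
  show "spine_edges B \<subseteq> {{x,y} | x y. adj x y}"
    unfolding spine_edges_def adj_def blk_def by blast
next
  show "{{x,y} | x y. adj x y} \<subseteq> spine_edges B"
  proof
    fix e assume "e \<in> {{x,y} | x y. adj x y}"
    then obtain x y z u where e: "e = {x,y}" "blk x y z u" by (auto simp: adj_def)
    thus "e \<in> spine_edges B" unfolding spine_edges_def blk_def by (auto simp: insert_commute)
  qed
qed

lemma main: "is_cycle X (spine_edges B) 11"
proof -
  note S = adj_sym
  have "X \<noteq> {}" using cardX by auto
  then obtain x0 where x0: "x0 \<in> X" by blast
  obtain x1 where a01: "adj x0 x1" using nbx[OF x0] by blast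
  define f where "f n = fst (wk nxt x0 x1 n)" for n
  have fS: "f (Suc n) = snd (wk nxt x0 x1 n)" for n by (simp add: f_def)
  have fSS: "f (Suc (Suc n)) = nxt (f n) (f (Suc n))" for n by (simp add: f_def)
  have adjf: "adj (f n) (f (Suc n))" for n
  proof (induction n)
    case 0 show ?case using a01 by (simp add: f_def)
  next
    case (Suc n)
    show ?case using nxt_prop[OF S[OF Suc]] fSS by simp
  qed
  have nef: "f (Suc (Suc n)) \<noteq> f n" for n
    using nxt_prop[OF S[OF adjf[of n]]] fSS by simp
  have fX: "f n \<in> X" for n using adj_X[OF adjf[of n]] by blast
  have "\<not> inj_on f {..11}"
  proof
    assume "inj_on f {..11}"
    hence "card (f ` {..11}) = 12" by (simp add: card_image)
    moreover have "f ` {..11} \<subseteq> X" using fX by blast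
    hence "card (f ` {..11}) \<le> 11" using card_mono[OF finX] cardX by metis
    ultimately show False by simp
  qed
  then obtain i j where ij: "i \<le> 11" "j \<le> 11" "i \<noteq> j" "f i = f j" unfolding inj_on_def by auto
  define P where "P m \<longleftrightarrow> (\<exists>k<m. f m = f k)" for m
  have "P (max i j)"
  proof (cases "i < j")
    case True thus ?thesis using ij unfolding P_def by (auto simp: max_def)
  next
    case False hence "j < i" using ij by simp
    thus ?thesis using ij unfolding P_def by (auto simp: max_def)
  qed
  define n where "n = (LEAST m. P m)"
  have Pn: "P n" unfolding n_def by (rule LeastI) fact
  have nle: "n \<le> 11" using Least_le[of P "max i j"] \<open>P (max i j)\<close> ij unfolding n_def by simp
  have inj: "inj_on f {..<n}"
  proof (rule inj_onI)
    fix a b assume ab: "a \<in> {..<n}" "b \<in> {..<n}" "f a = f b"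
    show "a = b"
    proof (rule ccontr)
      assume "a \<noteq> b"
      hence "P (max a b)"
      proof (cases "a < b")
        case True thus ?thesis using ab unfolding P_def by (auto simp: max_def)
      next
        case False hence "b < a" using \<open>a \<noteq> b\<close> by simp
        thus ?thesis using ab unfolding P_def by (auto simp: max_def)
      qed
      hence "n \<le> max a b" unfolding n_def by (rule Least_le)
      thus False using ab by auto
    qed
  qed
  obtain j where j: "j < n" "f n = f j" using Pn unfolding P_def by blast
  have n1: "1 \<le> n" using j by simp
  have fn0: "f n = f 0"
  proof (rule ccontr)
    assume "f n \<noteq> f 0"
    hence j0: "j \<ge> 1" using j by (cases j) auto
    have jn: "j + 1 < n"
    proof (rule ccontr)
      assume "\<not> j + 1 < n" hence "n = Suc j" using j by simp
      thus False using adjf[of j] j adj_X by auto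
    qed
    obtain j' where j': "j = Suc j'" using j0 by (cases j) auto
    obtain m where m: "n = Suc m" using n1 by (cases n) auto
    have a1: "adj (f j) (f j')" using S[OF adjf[of j']] j' by simp
    have a2: "adj (f j) (f (Suc j))" using adjf by simp
    have a3: "adj (f j) (f m)" using S[OF adjf[of m]] m j by simp
    have ne12: "f j' \<noteq> f (Suc j)" using nef[of j'] j' by simp
    from nbr2[OF a1 a2 ne12 a3] show False
    proof
      assume "f m = f j'"
      hence "m = j'" using inj m j j' unfolding inj_on_def by auto
      thus False using m j j' by simp
    next
      assume "f m = f (Suc j)"
      hence "m = Suc j" using inj m jn unfolding inj_on_def by auto
      thus False using nef[of j] m j by simp
    qed
  qed
  have n3: "3 \<le> n"
  proof (rule ccontr)
    assume "\<not> 3 \<le> n"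
    hence "n = 1 \<or> n = 2" using n1 by auto
    thus False
    proof
      assume "n = 1" thus False using fn0 adj_X[OF adjf[of 0]] by simp
    next
      assume "n = 2" thus False using fn0 nef[of 0] by (simp add: numeral_2_eq_2)
    qed
  qed
  define pr where "pr i = (if i = 0 then n - 1 else i - 1)" for i
  define nx where "nx i = (if i = n - 1 then 0 else i + 1)" for i
  have prn: "pr i < n" "nx i < n" if "i < n" for i using that n3 by (auto simp: pr_def nx_def)
  have anx: "adj (f i) (f (nx i))" if "i < n" for i
  proof (cases "i = n - 1")
    case True
    then have "Suc i = n" using n1 by simp
    then show ?thesis using adjf[of i] fn0 True by (simp add: nx_def)
  next
    case False then show ?thesis using adjf[of i] by (simp add: nx_def)
  qed
  have apr: "adj (f i) (f (pr i))" if "i < n" for i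
  proof (cases "i = 0")
    case True
    have "Suc (n - 1) = n" using n1 by simp
    then show ?thesis using S[OF adjf[of "n - 1"]] fn0 True by (simp add: pr_def)
  next
    case False
    then obtain i' where "i = Suc i'" by (cases i) auto
    then show ?thesis using S[OF adjf[of i']] False by (simp add: pr_def)
  qed
  have pnx: "f (pr i) \<noteq> f (nx i)" if "i < n" for i
  proof -
    have "pr i \<noteq> nx i" using that n3 by (auto simp: pr_def nx_def)
    thus ?thesis using inj prn[OF that] unfolding inj_on_def by auto
  qed
  have nb: "adj (f i) y \<Longrightarrow> y = f (pr i) \<or> y = f (nx i)" if "i < n" for i y
    using nbr2[OF apr[OF that] anx[OF that] pnx[OF that]] by blast
  have "closed (f ` {..<n})"
    unfolding closed_def
  proof (intro conjI ballI allI impI)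
    show "f ` {..<n} \<subseteq> X" using fX by blast
  next
    fix x y assume "x \<in> f ` {..<n}" "adj x y"
    then obtain i where i: "i < n" "x = f i" by auto
    show "y \<in> f ` {..<n}" using nb[OF i(1)] \<open>adj x y\<close> i prn[OF i(1)] by auto
  qed
  moreover have "f 0 \<in> f ` {..<n}" using n1 by auto
  moreover have "f ` {..<n} \<noteq> {}" using calculation(2) by blast
  ultimately have imX: "f ` {..<n} = X" using closed_all by blast
  have n11: "n = 11" using card_image[OF inj] imX cardX by simp
  have bij: "bij_betw f {0..<11} X" using inj imX n11 unfolding bij_betw_def by (simp add: lessThan_atLeast0)
  have nxm: "nx i = (i + 1) mod 11" if "i < 11" for i using that n11 by (auto simp: nx_def)
  have E: "{{x,y} | x y. adj x y} = {{f i, f ((i + 1) mod 11)} | i. i < 11}"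
  proof
    show "{{x,y} | x y. adj x y} \<subseteq> {{f i, f ((i + 1) mod 11)} | i. i < 11}"
    proof
      fix e assume "e \<in> {{x,y} | x y. adj x y}"
      then obtain x y where e: "e = {x,y}" "adj x y" by auto
      obtain i where i: "i < 11" "x = f i" using imX n11 e(2) adj_X by (metis imageE lessThan_iff)
      have "y = f (pr i) \<or> y = f (nx i)" using nb i e n11 by auto
      thus "e \<in> {{f i, f ((i + 1) mod 11)} | i. i < 11}"
      proof
        assume y: "y = f (pr i)"
        have "pr i < 11" "nx (pr i) = i" using i n11 by (auto simp: pr_def nx_def)
        hence "e = {f (pr i), f ((pr i + 1) mod 11)}" using e y i nxm[of "pr i"] by (auto simp: insert_commute)
        thus ?thesis using \<open>pr i < 11\<close> by blast
      next
        assume y: "y = f (nx i)"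
        thus ?thesis using e y i nxm[of i] by auto
      qed
    qed
  next
    show "{{f i, f ((i + 1) mod 11)} | i. i < 11} \<subseteq> {{x,y} | x y. adj x y}"
    proof
      fix e assume "e \<in> {{f i, f ((i + 1) mod 11)} | i. i < 11}"
      then obtain i where e: "e = {f i, f ((i + 1) mod 11)}" "i < 11" by auto
      have "adj (f i) (f (nx i))" using anx e(2) n11 by simp
      thus "e \<in> {{x,y} | x y. adj x y}" using e nxm[of i] by auto
    qed
  qed
  show ?thesis unfolding is_cycle_def spine_adj E using bij by auto
qed

end

theorem lemma3p1:
  fixes X :: "'a set" and B :: "'a block set"
  assumes "K4e_design X B 11"
  shows "is_cycle X (spine_edges B) 11"
proof -
  interpret D11 X B by unfold_locales (rule assms)
  show ?thesis by (rule main)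
qed



end
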